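(* Suppose $\beta_j\ne0$ for $j=2,\dots,k$ in the Lanczos process, and let $T_k=Y\Theta Y^{\top}$ with $Y=[y_1,\dots,y_k]$ orthogonal and $\Theta=\operatorname{diag}(\vartheta_1,\dots,\vartheta_k)$. Then the optimal value $\mu^{(k)}$ of rLGopt is the smallest root of the secular function $\widehat\chi(\lambda)=\|b_0\|^2e_1^{\top}(T_k-\lambda I)^{-2}e_1-\gamma^2=\sum_{i=1}^k\frac{\zeta_i^2}{(\lambda-\vartheta_i)^2}-\gamma^2$, where $\zeta_i=\|b_0\|e_1^{\top}y_i$. Furthermore, $(\mu^{(k)},x^{(k)})=(\mu^{(k)},-\|b_0\|(T_k-\mu^{(k)}I)^{-1}e_1)$ is a minimizer of rLGopt.
   Context: Let $M\in\mathbb{R}^{n\times n}$ be symmetric (in the paper $M=PAP$) and $0\ne b_0\in\mathbb{R}^n$, $\gamma>0$. Lanczos process: $q_0=0$, $\beta_1=\|b_0\|$, $q_1=b_0/\|b_0\|$, for $j=1,2,\dots$: $\alpha_j=q_j^{\top}Mq_j$, $\widehat q_{j+1}=Mq_j-\alpha_jq_j-\beta_jq_{j-1}$, $\beta_{j+1}=\|\widehat q_{j+1}\|$, $q_{j+1}=\widehat q_{j+1}/\beta_{j+1}$ when $\beta_{j+1}>0$. $T_k$ is the $k\times k$ symmetric tridiagonal matrix with diagonal $\alpha_1,\dots,\alpha_k$ and off-diagonal entries $\beta_2,\dots,\beta_k$. rLGopt: minimize $\lambda$ over $(\lambda,x)\in\mathbb{R}\times\mathbb{R}^k$ with $(T_k-\lambda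 I)x=-\|b_0\|e_1$ and $\|x\|=\gamma$. *)

theory Defs
  imports "Jordan_Normal_Form.Matrix"
begin

definition vnorm :: "real vec \<Rightarrow> real" where
  "vnorm v = sqrt (v \<bullet> v)"

definition minv :: "real mat \<Rightarrow> real mat" where
  "minv A = (THE B. B \<in> carrier_mat (dim_row A) (dim_row A) \<and>
                    A * B = 1\<^sub>m (dim_row A) \<and> B * A = 1\<^sub>m (dim_row A))"

text \<open>Lanczos state after step j: (q_j, q_(j+1), beta_(j+1)).\<close>
fun lanczos_state :: "real mat \<Rightarrow> real vec \<Rightarrow> nat \<Rightarrow> real vec \<times> real vec \<times> real" where
  "lanczos_state M b0 0 =
     (0\<^sub>v (dim_vec b0), (1 / vnorm b0) \<cdot>\<^sub>v b0, vnorm b0)"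
| "lanczos_state M b0 (Suc j) =
     (let (qp, qc, bc) = lanczos_state M b0 j;
          a = qc \<bullet> (M *\<^sub>v qc);
          qh = M *\<^sub>v qc - a \<cdot>\<^sub>v qc - bc \<cdot>\<^sub>v qp;
          bn = vnorm qh;
          qn = (if bn > 0 then (1 / bn) \<cdot>\<^sub>v qh else 0\<^sub>v (dim_vec b0))
      in (qc, qn, bn))"

definition lanczos_q :: "real mat \<Rightarrow> real vec \<Rightarrow> nat \<Rightarrow> real vec" where
  "lanczos_q M b0 j = fst (lanczos_state M b0 j)"

definition lanczos_beta :: "real mat \<Rightarrow> real vec \<Rightarrow> nat \<Rightarrow> real" where
  "lanczos_beta M b0 j = snd (snd (lanczos_state M b0 (j - 1)))"

definition lanczos_alpha :: "real mat \<Rightarrow> real vec \<Rightarrow> nat \<Rightarrow> real" where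
  "lanczos_alpha M b0 j = lanczos_q M b0 j \<bullet> (M *\<^sub>v lanczos_q M b0 j)"

text \<open>T_k, k x k symmetric tridiagonal; 0-based entry (i,j) corresponds to
  1-based (i+1, j+1): diagonal alpha_(i+1), off-diagonal beta_(max i j + 1).\<close>
definition lanczos_T :: "real mat \<Rightarrow> real vec \<Rightarrow> nat \<Rightarrow> real mat" where
  "lanczos_T M b0 k = mat k k (\<lambda>(i, j).
     if i = j then lanczos_alpha M b0 (i + 1)
     else if j = i + 1 \<or> i = j + 1 then lanczos_beta M b0 (max i j + 1)
     else 0)"

definition rLGopt_feasible :: "real mat \<Rightarrow> real vec \<Rightarrow> real \<Rightarrow> nat \<Rightarrow> (real \<times> real vec) set" where
  "rLGopt_feasible M b0 \<gamma> k = {(lam, x). x \<in> carrier_vec k \<and>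
      (lanczos_T M b0 k - lam \<cdot>\<^sub>m 1\<^sub>m k) *\<^sub>v x = (- vnorm b0) \<cdot>\<^sub>v unit_vec k 0 \<and>
      vnorm x = \<gamma>}"

end

theory Submission
  imports Defs "Jordan_Normal_Form.Determinant"
begin
definition dmat :: "nat \<Rightarrow> (nat \<Rightarrow> real) \<Rightarrow> real mat" where
  "dmat k f = mat k k (\<lambda>(i,j). if i = j then f i else 0)"

lemma dmat_carrier[simp]: "dmat k f \<in> carrier_mat k k"
  by (simp add: dmat_def)

lemma dmat_dims[simp]: "dim_row (dmat k f) = k" "dim_col (dmat k f) = k"
  by (simp_all add: dmat_def)

lemma dmat_index[simp]: "i < k \<Longrightarrow> j < k \<Longrightarrow> dmat k f $$ (i,j) = (if i = j then f i else 0)"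
  by (simp add: dmat_def)

lemma mult_dmat_right:
  assumes A: "A \<in> carrier_mat n k" and i: "i < n" and j: "j < k"
  shows "(A * dmat k g) $$ (i,j) = A $$ (i,j) * g j"
proof -
  have "(A * dmat k g) $$ (i,j) = (\<Sum>l\<in>{0..<k}. A $$ (i,l) * dmat k g $$ (l,j))"
    using A i j by (auto simp: scalar_prod_def)
  also have "\<dots> = (\<Sum>l\<in>{0..<k}. (if l = j then A $$ (i,l) * g j else 0))"
    using j by (intro sum.cong) auto
  also have "\<dots> = A $$ (i,j) * g j" using j by simp
  finally show ?thesis .
qed

lemma dmat_mult_vec:
  assumes v: "v \<in> carrier_vec k" and i: "i < k"
  shows "(dmat k f *\<^sub>v v) $ i = f i * v $ i"
proof -
  have "(dmat k f *\<^sub>v v) $ i = (\<Sum>l\<in>{0..<k}. dmat k f $$ (i,l) * v $ l)"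
    using v i by (auto simp: scalar_prod_def)
  also have "\<dots> = (\<Sum>l\<in>{0..<k}. (if l = i then f i * v $ l else 0))"
    using i by (intro sum.cong) auto
  also have "\<dots> = f i * v $ i" using i by simp
  finally show ?thesis .
qed

lemma dmat_mult: "dmat k f * dmat k g = dmat k (\<lambda>i. f i * g i)"
proof (rule eq_matI)
  fix i j assume "i < dim_row (dmat k (\<lambda>i. f i * g i))" "j < dim_col (dmat k (\<lambda>i. f i * g i))"
  then have "i < k" "j < k" by auto
  then show "(dmat k f * dmat k g) $$ (i, j) = dmat k (\<lambda>i. f i * g i) $$ (i, j)"
    by (subst mult_dmat_right[of _ k k]) auto
qed auto

lemma dmat_one: "dmat k (\<lambda>_. 1) = 1\<^sub>m k"
  by (rule eq_matI, auto)

lemma UDU_index: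
  assumes U: "U \<in> carrier_mat n k" and i: "i < n" and j: "j < n"
  shows "(U * dmat k f * transpose_mat U) $$ (i,j) = (\<Sum>l\<in>{0..<k}. U $$ (i,l) * f l * U $$ (j,l))"
proof -
  have "(U * dmat k f * transpose_mat U) $$ (i,j) = (\<Sum>l\<in>{0..<k}. (U * dmat k f) $$ (i,l) * U $$ (j,l))"
    using U i j by (auto simp: scalar_prod_def intro!: sum.cong)
  also have "\<dots> = (\<Sum>l\<in>{0..<k}. U $$ (i,l) * f l * U $$ (j,l))"
    by (intro sum.cong refl, subst mult_dmat_right[OF U i]) auto
  finally show ?thesis .
qed

lemma UDU_carrier[simp]: "U \<in> carrier_mat n k \<Longrightarrow> U * dmat k f * transpose_mat U \<in> carrier_mat n n"
  by auto

lemma UDU_mult: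
  assumes U: "U \<in> carrier_mat k k" and orth: "transpose_mat U * U = 1\<^sub>m k"
  shows "(U * dmat k f * transpose_mat U) * (U * dmat k g * transpose_mat U)
       = U * dmat k (\<lambda>i. f i * g i) * transpose_mat U"
proof -
  define F where "F = dmat k f"
  define G where "G = dmat k g"
  define V where "V = transpose_mat U"
  have F: "F \<in> carrier_mat k k" and G: "G \<in> carrier_mat k k" and V: "V \<in> carrier_mat k k"
    using U by (auto simp: F_def G_def V_def)
  have VU: "V * U = 1\<^sub>m k" using orth V_def by simp
  have e1: "(U * F * V) * (U * G * V) = (U * F) * (V * (U * G * V))"
    using U F G V by (intro assoc_mult_mat[of "U*F" k k V k "U*G*V" k]) auto
  have "U * G * V = U * (G * V)"
    using U F G V by (intro assoc_mult_mat[of U k k G k V k]) auto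
  then have "V * (U * G * V) = V * (U * (G * V))" by simp
  also have "V * (U * (G * V)) = (V * U) * (G * V)"
    using U F G V by (intro assoc_mult_mat[of V k k U k "G*V" k, symmetric]) auto
  also have "\<dots> = G * V" using VU G V by simp
  finally have e2: "V * (U * G * V) = G * V" .
  have "(U * F) * (G * V) = U * (F * (G * V))"
    using U F G V by (intro assoc_mult_mat[of U k k F k "G*V" k]) auto
  also have "F * (G * V) = (F * G) * V"
    using U F G V by (intro assoc_mult_mat[of F k k G k V k, symmetric]) auto
  also have "U * ((F * G) * V) = U * (F * G) * V"
    using U F G V by (intro assoc_mult_mat[of U k k "F*G" k V k, symmetric]) auto
  finally have e3: "(U * F) * (G * V) = U * (F * G) * V" .
  have "(U * F * V) * (U * G * V) = U * (F * G) * V" using e1 e2 e3 by simp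
  then show ?thesis by (simp add: F_def G_def V_def dmat_mult)
qed

lemma UDU_transpose:
  assumes U: "U \<in> carrier_mat k k"
  shows "transpose_mat (U * dmat k f * transpose_mat U) = U * dmat k f * transpose_mat U"
proof (rule eq_matI)
  fix i j assume "i < dim_row (U * dmat k f * transpose_mat U)" "j < dim_col (U * dmat k f * transpose_mat U)"
  then have ij: "i < k" "j < k" using U by auto
  then show "transpose_mat (U * dmat k f * transpose_mat U) $$ (i, j) = (U * dmat k f * transpose_mat U) $$ (i, j)"
  proof -
    have "transpose_mat (U * dmat k f * transpose_mat U) $$ (i, j) = (U * dmat k f * transpose_mat U) $$ (j, i)"
      using ij U by (intro index_transpose_mat) auto
    also have "\<dots> = (\<Sum>l\<in>{0..<k}. U $$ (j,l) * f l * U $$ (i,l))" by (rule UDU_index[OF U ij(2) ij(1)])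
    also have "\<dots> = (U * dmat k f * transpose_mat U) $$ (i, j)" by (subst UDU_index[OF U ij]) (simp add: mult_ac)
    finally show ?thesis .
  qed
qed (insert U, auto)

lemma UDU_one:
  assumes U: "U \<in> carrier_mat k k" and orth: "transpose_mat U * U = 1\<^sub>m k"
  shows "U * dmat k (\<lambda>_. 1) * transpose_mat U = 1\<^sub>m k"
proof -
  have "U * transpose_mat U = 1\<^sub>m k"
    using mat_mult_left_right_inverse[of "transpose_mat U" k U] U orth by simp
  then show ?thesis using U by (simp add: dmat_one)
qed


lemma dmat_cong: "(\<And>i. i < k \<Longrightarrow> f i = g i) \<Longrightarrow> dmat k f = dmat k g"
  by (rule eq_matI) auto

lemma minv_eq:
  assumes A: "A \<in> carrier_mat n n" and B: "B \<in> carrier_mat n n"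
    and AB: "A * B = 1\<^sub>m n" and BA: "B * A = 1\<^sub>m n"
  shows "minv A = B"
  unfolding minv_def
proof (rule the_equality)
  show "B \<in> carrier_mat (dim_row A) (dim_row A) \<and> A * B = 1\<^sub>m (dim_row A) \<and> B * A = 1\<^sub>m (dim_row A)"
    using A B AB BA by auto
next
  fix C assume C: "C \<in> carrier_mat (dim_row A) (dim_row A) \<and> A * C = 1\<^sub>m (dim_row A) \<and> C * A = 1\<^sub>m (dim_row A)"
  then have C1: "C \<in> carrier_mat n n" and CA: "C * A = 1\<^sub>m n" using A by auto
  have "C = C * (A * B)" using C1 AB by simp
  also have "\<dots> = (C * A) * B" using C1 A B by (intro assoc_mult_mat[symmetric, of _ n n _ n _ n]) auto
  also have "\<dots> = B" using CA B by simp
  finally show "C = B" .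
qed

lemma e1_quad:
  fixes C :: "real mat"
  assumes C: "C \<in> carrier_mat k k" and k: "0 < k"
  shows "unit_vec k 0 \<bullet> (C *\<^sub>v unit_vec k 0) = C $$ (0,0)"
proof -
  have "unit_vec k 0 \<bullet> (C *\<^sub>v unit_vec k 0) = (C *\<^sub>v unit_vec k 0) $ 0"
    by (rule scalar_prod_left_unit[of _ k]) (use C k in auto)
  also have "\<dots> = row C 0 \<bullet> unit_vec k 0" using C k by simp
  also have "\<dots> = row C 0 $ 0" by (rule scalar_prod_right_unit) (use C k in auto)
  finally show ?thesis using C k by simp
qed

lemma frac_sq_mono:
  fixes a b t c :: real
  assumes "a \<le> b" "b < t" "0 \<le> c"
  shows "c / (a - t)^2 \<le> c / (b - t)^2"
proof -
  have "(t - b)^2 \<le> (t - a)^2" by (rule power_mono) (use assms in auto)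
  then have "(b - t)^2 \<le> (a - t)^2" by (simp add: power2_commute)
  moreover have "0 < (b - t)^2" using assms by simp
  ultimately show ?thesis using assms by (intro divide_left_mono) (auto intro: mult_pos_pos)
qed

lemma frac_sq_strict:
  fixes a b t c :: real
  assumes "a < b" "b < t" "0 < c"
  shows "c / (a - t)^2 < c / (b - t)^2"
proof -
  have "(t - b)^2 < (t - a)^2" by (rule power_strict_mono) (use assms in auto)
  then have "(b - t)^2 < (a - t)^2" by (simp add: power2_commute)
  moreover have "0 < (b - t)^2" using assms by simp
  ultimately show ?thesis using assms by (intro divide_strict_left_mono) (auto intro: mult_pos_pos)
qed


theorem theorem3p2:
  fixes M :: "real mat" and b0 :: "real vec" and \<gamma> :: real and n k :: nat
    and Y :: "real mat" and \<theta> :: "nat \<Rightarrow> real"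
  assumes M_carrier: "M \<in> carrier_mat n n"
    and M_sym: "transpose_mat M = M"
    and b0_carrier: "b0 \<in> carrier_vec n"
    and b0_nz: "b0 \<noteq> 0\<^sub>v n"
    and gamma_pos: "\<gamma> > 0"
    and k_pos: "k \<ge> 1"
    and beta_nz: "\<And>j. 2 \<le> j \<Longrightarrow> j \<le> k \<Longrightarrow> lanczos_beta M b0 j \<noteq> 0"
    and Y_carrier: "Y \<in> carrier_mat k k"
    and Y_orth: "transpose_mat Y * Y = 1\<^sub>m k"
    and T_eig: "lanczos_T M b0 k =
                  Y * mat k k (\<lambda>(i, j). if i = j then \<theta> i else 0) * transpose_mat Y"
  shows
    "(\<forall>lam. (\<forall>i<k. lam \<noteq> \<theta> i) \<longrightarrow>
        vnorm b0 ^ 2 * (unit_vec k 0 \<bullet> ((minv (lanczos_T M b0 k - lam \<cdot>\<^sub>m 1\<^sub>m k) ^\<^sub>m 2)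
                                          *\<^sub>v unit_vec k 0)) - \<gamma> ^ 2
        = (\<Sum>i<k. (vnorm b0 * Y $$ (0, i)) ^ 2 / (lam - \<theta> i) ^ 2) - \<gamma> ^ 2)
     \<and> (\<exists>\<mu>.
          \<comment> \<open>mu is the smallest root of the secular function\<close>
          ((\<forall>i<k. \<mu> \<noteq> \<theta> i) \<and>
           (\<Sum>i<k. (vnorm b0 * Y $$ (0, i)) ^ 2 / (\<mu> - \<theta> i) ^ 2) - \<gamma> ^ 2 = 0) \<and>
          (\<forall>r. (\<forall>i<k. r \<noteq> \<theta> i) \<and>
               (\<Sum>i<k. (vnorm b0 * Y $$ (0, i)) ^ 2 / (r - \<theta> i) ^ 2) - \<gamma> ^ 2 = 0
               \<longrightarrow> \<mu> \<le> r) \<and>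
          \<comment> \<open>mu is the optimal value of rLGopt, attained at the stated x\<close>
          (\<forall>(lam, x) \<in> rLGopt_feasible M b0 \<gamma> k. \<mu> \<le> lam) \<and>
          (\<mu>, (- vnorm b0) \<cdot>\<^sub>v (minv (lanczos_T M b0 k - \<mu> \<cdot>\<^sub>m 1\<^sub>m k) *\<^sub>v unit_vec k 0))
             \<in> rLGopt_feasible M b0 \<gamma> k)"
proof -
  define T where "T = lanczos_T M b0 k"
  define e where "e = (unit_vec k 0 :: real vec)"
  define nb where "nb = vnorm b0"
  define V where "V = transpose_mat Y"
  define \<phi> where "\<phi> = (\<lambda>r. (\<Sum>i<k. (nb * Y $$ (0, i)) ^ 2 / (r - \<theta> i) ^ 2))"
  have Tcar: "T \<in> carrier_mat k k" by (simp add: T_def lanczos_T_def)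
  have Teq: "T = Y * dmat k \<theta> * V" using T_eig by (simp add: T_def V_def dmat_def)
  have Vcar: "V \<in> carrier_mat k k" using Y_carrier by (simp add: V_def)
  have VY: "V * Y = 1\<^sub>m k" using Y_orth by (simp add: V_def)
  have YV: "Y * V = 1\<^sub>m k"
    using mat_mult_left_right_inverse[of V k Y] Vcar Y_carrier VY by simp
  have k0: "0 < k" using k_pos by simp
  have nbpos: "nb > 0"
  proof -
    have "b0 \<bullet> b0 \<noteq> 0"
    proof
      assume "b0 \<bullet> b0 = 0"
      then have "(\<Sum>i\<in>{0..<n}. b0 $ i * b0 $ i) = 0" using b0_carrier by (simp add: scalar_prod_def)
      then have "\<forall>i\<in>{0..<n}. b0 $ i * b0 $ i = 0"
        by (subst (asm) sum_nonneg_eq_0_iff) auto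
      then have "b0 = 0\<^sub>v n" using b0_carrier by (intro eq_vecI) auto
      then show False using b0_nz by simp
    qed
    moreover have "b0 \<bullet> b0 \<ge> 0" by (simp add: scalar_prod_def sum_nonneg)
    ultimately show ?thesis by (simp add: nb_def vnorm_def)
  qed
  have Aeq: "T - lam \<cdot>\<^sub>m 1\<^sub>m k = Y * dmat k (\<lambda>i. \<theta> i - lam) * V" for lam
  proof (rule eq_matI)
    fix i j assume "i < dim_row (Y * dmat k (\<lambda>i. \<theta> i - lam) * V)" "j < dim_col (Y * dmat k (\<lambda>i. \<theta> i - lam) * V)"
    then have ij: "i < k" "j < k" using Y_carrier Vcar by auto
    have "(T - lam \<cdot>\<^sub>m 1\<^sub>m k) $$ (i,j) = T $$ (i,j) - lam * 1\<^sub>m k $$ (i,j)"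
      using ij Tcar by simp
    also have "T $$ (i,j) = (\<Sum>l\<in>{0..<k}. Y $$ (i,l) * \<theta> l * Y $$ (j,l))"
      unfolding Teq V_def by (rule UDU_index[OF Y_carrier ij])
    also have "1\<^sub>m k $$ (i,j) = (\<Sum>l\<in>{0..<k}. Y $$ (i,l) * 1 * Y $$ (j,l))"
      unfolding UDU_one[OF Y_carrier Y_orth, symmetric] by (rule UDU_index[OF Y_carrier ij])
    also have "(Y * dmat k (\<lambda>i. \<theta> i - lam) * V) $$ (i,j) = (\<Sum>l\<in>{0..<k}. Y $$ (i,l) * (\<theta> l - lam) * Y $$ (j,l))"
      unfolding V_def by (rule UDU_index[OF Y_carrier ij])
    ultimately show "(T - lam \<cdot>\<^sub>m 1\<^sub>m k) $$ (i,j) = (Y * dmat k (\<lambda>i. \<theta> i - lam) * V) $$ (i,j)"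
      by (simp add: sum_distrib_left sum_subtractf[symmetric] algebra_simps)
  qed (insert Tcar Y_carrier Vcar, auto)
  have inv: "minv (T - lam \<cdot>\<^sub>m 1\<^sub>m k) = Y * dmat k (\<lambda>i. 1 / (\<theta> i - lam)) * V
      \<and> (T - lam \<cdot>\<^sub>m 1\<^sub>m k) * minv (T - lam \<cdot>\<^sub>m 1\<^sub>m k) = 1\<^sub>m k"
    if lam: "\<forall>i<k. lam \<noteq> \<theta> i" for lam
  proof -
    have d1: "dmat k (\<lambda>i. (\<theta> i - lam) * (1 / (\<theta> i - lam))) = dmat k (\<lambda>_. 1)"
      by (rule dmat_cong) (use lam in auto)
    have d2: "dmat k (\<lambda>i. (1 / (\<theta> i - lam)) * (\<theta> i - lam)) = dmat k (\<lambda>_. 1)"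
      by (rule dmat_cong) (use lam in auto)
    have AB: "(Y * dmat k (\<lambda>i. \<theta> i - lam) * V) * (Y * dmat k (\<lambda>i. 1 / (\<theta> i - lam)) * V) = 1\<^sub>m k"
      unfolding V_def UDU_mult[OF Y_carrier Y_orth] d1 UDU_one[OF Y_carrier Y_orth] ..
    have BA: "(Y * dmat k (\<lambda>i. 1 / (\<theta> i - lam)) * V) * (Y * dmat k (\<lambda>i. \<theta> i - lam) * V) = 1\<^sub>m k"
      unfolding V_def UDU_mult[OF Y_carrier Y_orth] d2 UDU_one[OF Y_carrier Y_orth] ..
    have "minv (T - lam \<cdot>\<^sub>m 1\<^sub>m k) = Y * dmat k (\<lambda>i. 1 / (\<theta> i - lam)) * V"
      unfolding Aeq by (rule minv_eq[OF _ _ AB BA]) (use Y_carrier Vcar in auto)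
    then show ?thesis using AB Aeq by simp
  qed
  have quad: "nb ^ 2 * (e \<bullet> ((minv (T - lam \<cdot>\<^sub>m 1\<^sub>m k) ^\<^sub>m 2) *\<^sub>v e)) = \<phi> lam"
    if lam: "\<forall>i<k. lam \<noteq> \<theta> i" for lam
  proof -
    define B where "B = Y * dmat k (\<lambda>i. 1 / (\<theta> i - lam)) * V"
    have Bcar: "B \<in> carrier_mat k k" using Y_carrier by (simp add: B_def V_def)
    have "minv (T - lam \<cdot>\<^sub>m 1\<^sub>m k) ^\<^sub>m 2 = B * B"
      using inv[OF lam] Bcar by (simp add: B_def[symmetric] numeral_2_eq_2)
    also have "\<dots> = Y * dmat k (\<lambda>i. 1 / (\<theta> i - lam) * (1 / (\<theta> i - lam))) * V"
      unfolding B_def V_def by (rule UDU_mult[OF Y_carrier Y_orth])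
    finally have "e \<bullet> ((minv (T - lam \<cdot>\<^sub>m 1\<^sub>m k) ^\<^sub>m 2) *\<^sub>v e)
        = e \<bullet> ((Y * dmat k (\<lambda>i. 1 / (\<theta> i - lam) * (1 / (\<theta> i - lam))) * V) *\<^sub>v e)"
      by simp
    also have "\<dots> = (Y * dmat k (\<lambda>i. 1 / (\<theta> i - lam) * (1 / (\<theta> i - lam))) * V) $$ (0,0)"
      unfolding e_def by (rule e1_quad[OF _ k0]) (use Y_carrier in \<open>simp add: V_def\<close>)
    also have "\<dots> = (\<Sum>l\<in>{0..<k}. Y $$ (0,l) * (1 / (\<theta> l - lam) * (1 / (\<theta> l - lam))) * Y $$ (0,l))"
      unfolding V_def by (rule UDU_index[OF Y_carrier k0 k0])
    finally show ?thesis
      by (simp add: \<phi>_def sum_distrib_left atLeast0LessThan power2_eq_square algebra_simps)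
  qed
  have VY_entry: "(V * Y) $$ (i,i) = (\<Sum>j\<in>{0..<k}. Y $$ (j,i) * Y $$ (j,i))" if i: "i < k" for i
    using i Y_carrier by (simp add: V_def scalar_prod_def)
  have TY: "T * Y = Y * dmat k \<theta>"
  proof -
    have "T * Y = (Y * dmat k \<theta>) * (V * Y)"
      unfolding Teq using Y_carrier Vcar by (intro assoc_mult_mat[of "Y * dmat k \<theta>" k k V k Y k]) auto
    also have "\<dots> = Y * dmat k \<theta>" using VY Y_carrier by simp
    finally show ?thesis .
  qed
  have entry: "(\<Sum>l\<in>{0..<k}. T $$ (m,l) * Y $$ (l,i)) = Y $$ (m,i) * \<theta> i" if "m < k" "i < k" for m i
  proof -
    have "(T * Y) $$ (m,i) = (\<Sum>l\<in>{0..<k}. T $$ (m,l) * Y $$ (l,i))"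
      using that Tcar Y_carrier by (simp add: scalar_prod_def)
    moreover have "(Y * dmat k \<theta>) $$ (m,i) = Y $$ (m,i) * \<theta> i"
      by (rule mult_dmat_right[OF Y_carrier that])
    ultimately show ?thesis using TY by simp
  qed
  have Tent: "T $$ (m,l) = 0" if "m < k" "l < k" "l \<noteq> m" "l \<noteq> Suc m" "m \<noteq> Suc l" for m l
    using that by (simp add: T_def lanczos_T_def)
  have Tsup: "T $$ (m, Suc m) \<noteq> 0" if "Suc m < k" for m
    using that beta_nz[of "Suc m + 1"] by (simp add: T_def lanczos_T_def)
  have Ynz: "Y $$ (0,i) \<noteq> 0" if i: "i < k" for i
  proof
    assume Y0: "Y $$ (0,i) = 0"
    have "\<forall>j\<le>m. Y $$ (j,i) = 0" if "m < k" for m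
      using that
    proof (induction m)
      case 0 then show ?case using Y0 by simp
    next
      case (Suc m)
      then have IH: "\<forall>j\<le>m. Y $$ (j,i) = 0" by simp
      have "(\<Sum>l\<in>{0..<k}. T $$ (m,l) * Y $$ (l,i)) = 0"
        using entry[of m i] Suc.prems i IH by simp
      moreover have "(\<Sum>l\<in>{0..<k}. T $$ (m,l) * Y $$ (l,i))
          = (\<Sum>l\<in>{0..<k}. if l = Suc m then T $$ (m, Suc m) * Y $$ (Suc m, i) else 0)"
      proof (rule sum.cong[OF refl])
        fix l assume l: "l \<in> {0..<k}"
        show "T $$ (m,l) * Y $$ (l,i) = (if l = Suc m then T $$ (m, Suc m) * Y $$ (Suc m, i) else 0)"
        proof (cases "l \<le> m")
          case True then show ?thesis using IH by auto
        next
          case False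
          then show ?thesis using Tent[of m l] l Suc.prems by auto
        qed
      qed
      ultimately have "T $$ (m, Suc m) * Y $$ (Suc m, i) = 0" using Suc.prems by simp
      then have "Y $$ (Suc m, i) = 0" using Tsup[OF Suc.prems] by simp
      then show ?case using IH le_Suc_eq by auto
    qed
    then have "\<forall>j<k. Y $$ (j,i) = 0" by auto
    then have "(V * Y) $$ (i,i) = 0" using VY_entry[OF i] by simp
    then show False using VY i by simp
  qed
  define \<zeta> where "\<zeta> = (\<lambda>i. nb * Y $$ (0,i))"
  have \<zeta>nz: "\<zeta> i \<noteq> 0" if "i < k" for i using nbpos Ynz[OF that] by (simp add: \<zeta>_def)
  have \<phi>_alt: "\<phi> r = (\<Sum>i<k. \<zeta> i ^ 2 / (r - \<theta> i) ^ 2)" for r by (simp add: \<phi>_def \<zeta>_def)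
  define \<theta>m where "\<theta>m = Min (\<theta> ` {..<k})"
  have \<theta>m_le: "\<theta>m \<le> \<theta> i" if "i < k" for i using that by (simp add: \<theta>m_def)
  have "\<theta>m \<in> \<theta> ` {..<k}" unfolding \<theta>m_def using k0 by (intro Min_in) auto
  then obtain i0 where i0: "i0 < k" "\<theta> i0 = \<theta>m" by auto
  define S where "S = (\<Sum>i<k. \<zeta> i ^ 2)"
  have S0: "S \<ge> 0" by (simp add: S_def sum_nonneg)
  define c where "c = \<bar>\<zeta> i0\<bar>"
  have c0: "c > 0" using \<zeta>nz[OF i0(1)] by (simp add: c_def)
  define d where "d = (S + 1) / \<gamma> + c / (2 * \<gamma>)"
  define l1 where "l1 = \<theta>m - c / (2 * \<gamma>)"
  define l0 where "l0 = \<theta>m - d"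
  have d0: "d > 0"
  proof -
    have "(S + 1) / \<gamma> > 0" using S0 gamma_pos by simp
    moreover have "c / (2 * \<gamma>) > 0" using c0 gamma_pos by simp
    ultimately show ?thesis by (simp add: d_def)
  qed
  have l01: "l0 \<le> l1" using S0 gamma_pos by (simp add: l0_def l1_def d_def)
  have l1m: "l1 < \<theta>m" using c0 gamma_pos by (simp add: l1_def)
  have f1: "\<phi> l1 - \<gamma>^2 \<ge> 0"
  proof -
    have "\<zeta> i0 ^ 2 / (l1 - \<theta> i0) ^ 2 \<le> \<phi> l1"
      unfolding \<phi>_alt using i0 by (intro member_le_sum) auto
    moreover have "\<zeta> i0 ^ 2 / (l1 - \<theta> i0) ^ 2 = 4 * \<gamma>^2"
    proof -
      have "\<zeta> i0 ^ 2 = c ^ 2" by (simp add: c_def)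
      moreover have "(l1 - \<theta> i0) ^ 2 = c^2 / (4 * \<gamma>^2)"
        using i0 by (simp add: l1_def power_divide power2_eq_square)
      moreover have "(l1 - \<theta> i0)^2 > 0" using l1m i0 by simp
      ultimately show ?thesis using c0 gamma_pos by (simp add: field_simps)
    qed
    moreover have "\<gamma>^2 \<ge> 0" by simp
    ultimately show ?thesis by linarith
  qed
  have f0: "\<phi> l0 - \<gamma>^2 \<le> 0"
  proof -
    have "\<phi> l0 \<le> (\<Sum>i<k. \<zeta> i ^ 2 / d ^ 2)"
      unfolding \<phi>_alt
    proof (rule sum_mono)
      fix i assume "i \<in> {..<k}"
      then have "\<theta>m \<le> \<theta> i" using \<theta>m_le by auto
      then have "d ^ 2 \<le> (\<theta> i - l0) ^ 2" using d0 by (intro power_mono) (auto simp: l0_def)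
      moreover have "0 < d ^ 2" using d0 by simp
      ultimately have "0 < (\<theta> i - l0) ^ 2 * d ^ 2" by (intro mult_pos_pos) auto
      with \<open>d ^ 2 \<le> (\<theta> i - l0) ^ 2\<close>
      have "\<zeta> i ^ 2 / (\<theta> i - l0) ^ 2 \<le> \<zeta> i ^ 2 / d ^ 2"
        by (intro divide_left_mono) auto
      then show "\<zeta> i ^ 2 / (l0 - \<theta> i) ^ 2 \<le> \<zeta> i ^ 2 / d ^ 2" by (simp add: power2_commute)
    qed
    also have "\<dots> = S / d^2" by (simp add: S_def sum_divide_distrib)
    also have "\<dots> \<le> \<gamma>^2"
    proof -
      have "d * \<gamma> \<ge> S + 1" using gamma_pos c0 by (simp add: d_def field_simps)
      then have "(S + 1)^2 \<le> (d * \<gamma>)^2" using S0 by (intro power_mono) auto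
      moreover have "S \<le> (S + 1)^2" using S0 by (simp add: power2_eq_square algebra_simps)
      ultimately have "S \<le> \<gamma>^2 * d^2" by (simp add: power_mult_distrib mult.commute)
      then show ?thesis using d0 by (simp add: divide_le_eq)
    qed
    finally show ?thesis by simp
  qed
  have cont: "continuous_on {l0..l1} (\<lambda>r. \<phi> r - \<gamma>^2)"
    unfolding \<phi>_def
  proof (intro continuous_intros ballI)
    fix x i assume x: "x \<in> {l0..l1}" and i: "i \<in> {..<k}"
    then have "x < \<theta> i" using l1m \<theta>m_le[of i] by auto
    then show "(x - \<theta> i) ^ 2 \<noteq> 0" by simp
  qed
  obtain \<mu> where mu: "l0 \<le> \<mu>" "\<mu> \<le> l1" "\<phi> \<mu> - \<gamma>^2 = 0"
    using IVT'[of "\<lambda>r. \<phi> r - \<gamma>^2" l0 0 l1, OF f0 f1 l01 cont] by auto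
  have mu_lt: "\<mu> < \<theta> i" if "i < k" for i using mu l1m \<theta>m_le[OF that] by auto
  have minimal: "\<mu> \<le> r" if "\<phi> r = \<gamma>^2" for r
  proof (rule ccontr)
    assume "\<not> \<mu> \<le> r"
    then have r: "r < \<mu>" by simp
    have "\<phi> r < \<phi> \<mu>" unfolding \<phi>_alt
    proof (rule sum_strict_mono_ex1)
      show "\<forall>i\<in>{..<k}. \<zeta> i ^ 2 / (r - \<theta> i) ^ 2 \<le> \<zeta> i ^ 2 / (\<mu> - \<theta> i) ^ 2"
        using r mu_lt by (auto intro!: frac_sq_mono)
      show "\<exists>i\<in>{..<k}. \<zeta> i ^ 2 / (r - \<theta> i) ^ 2 < \<zeta> i ^ 2 / (\<mu> - \<theta> i) ^ 2"
        using r mu_lt i0 \<zeta>nz[OF i0(1)] by (intro bexI[of _ i0] frac_sq_strict) auto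
    qed simp
    then show False using that mu by simp
  qed
  have xx_nonneg: "(x::real vec) \<bullet> x \<ge> 0" for x by (simp add: scalar_prod_def sum_nonneg)
  have opt: "\<mu> \<le> lam" if feas: "(lam, x) \<in> rLGopt_feasible M b0 \<gamma> k" for lam x
  proof -
    have xc: "x \<in> carrier_vec k" and eqn: "(T - lam \<cdot>\<^sub>m 1\<^sub>m k) *\<^sub>v x = (- nb) \<cdot>\<^sub>v e"
      and nx: "vnorm x = \<gamma>"
      using feas by (auto simp: rLGopt_feasible_def T_def nb_def e_def)
    define D where "D = dmat k (\<lambda>i. \<theta> i - lam)"
    define z where "z = V *\<^sub>v x"
    have zc: "z \<in> carrier_vec k" using Vcar xc by (simp add: z_def)
    have Dc: "D \<in> carrier_mat k k" by (simp add: D_def)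
    have VYDV: "V * (Y * D * V) = D * V"
    proof -
      have "V * (Y * D * V) = (V * (Y * D)) * V"
        using Vcar Y_carrier Dc by (intro assoc_mult_mat[of V k k "Y * D" k V k, symmetric]) auto
      also have "V * (Y * D) = (V * Y) * D"
        using Vcar Y_carrier Dc by (intro assoc_mult_mat[of V k k Y k D k, symmetric]) auto
      finally show ?thesis using VY Dc by simp
    qed
    have "V *\<^sub>v ((T - lam \<cdot>\<^sub>m 1\<^sub>m k) *\<^sub>v x) = (V * (Y * D * V)) *\<^sub>v x"
      unfolding Aeq D_def[symmetric] using Vcar Y_carrier Dc xc
      by (intro assoc_mult_mat_vec[symmetric, of _ k k _ k]) auto
    also have "\<dots> = D *\<^sub>v z" unfolding VYDV z_def using Vcar Dc xc
      by (intro assoc_mult_mat_vec[of _ k k _ k]) auto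
    finally have L: "V *\<^sub>v ((T - lam \<cdot>\<^sub>m 1\<^sub>m k) *\<^sub>v x) = D *\<^sub>v z" .
    have comp: "(\<theta> i - lam) * z $ i = - \<zeta> i" if i: "i < k" for i
    proof -
      have "(\<theta> i - lam) * z $ i = (D *\<^sub>v z) $ i" unfolding D_def by (rule dmat_mult_vec[OF zc i, symmetric])
      also have "\<dots> = (V *\<^sub>v ((- nb) \<cdot>\<^sub>v e)) $ i" using L eqn by simp
      also have "\<dots> = - nb * Y $$ (0, i)"
        using i Vcar k0 Y_carrier by (simp add: e_def V_def mult_mat_vec)
      finally show ?thesis by (simp add: \<zeta>_def)
    qed
    have "z \<bullet> z = x \<bullet> (Y *\<^sub>v z)"
      unfolding z_def V_def using Y_carrier xc
      by (intro transpose_vec_mult_scalar[of Y k k]) (auto simp: V_def[symmetric] z_def[symmetric] zc)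
    also have "Y *\<^sub>v z = (Y * V) *\<^sub>v x" unfolding z_def using Y_carrier Vcar xc
      by (intro assoc_mult_mat_vec[symmetric, of _ k k _ k]) auto
    also have "\<dots> = x" using YV xc by simp
    finally have zz: "z \<bullet> z = x \<bullet> x" .
    have "x \<bullet> x = \<gamma>^2" using nx xx_nonneg[of x] by (auto simp: vnorm_def)
    with zz have zz2: "(\<Sum>i\<in>{0..<k}. z $ i * z $ i) = \<gamma>^2" using zc by (simp add: scalar_prod_def)
    have nonev: "lam \<noteq> \<theta> i" if "i < k" for i
    proof
      assume "lam = \<theta> i"
      then show False using comp[OF that] \<zeta>nz[OF that] by simp
    qed
    have "\<phi> lam = (\<Sum>i\<in>{0..<k}. z $ i * z $ i)"
      unfolding \<phi>_alt atLeast0LessThan[symmetric]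
    proof (rule sum.cong[OF refl])
      fix i assume "i \<in> {0..<k}"
      then have i: "i < k" by simp
      have ne: "\<theta> i - lam \<noteq> 0" using nonev[OF i] by simp
      have "z $ i = - \<zeta> i / (\<theta> i - lam)" using comp[OF i] ne by (simp add: field_simps)
      then show "\<zeta> i ^ 2 / (lam - \<theta> i) ^ 2 = z $ i * z $ i"
        by (simp add: power2_eq_square power2_commute[of lam] field_simps)
    qed
    with zz2 have "\<phi> lam = \<gamma>^2" by simp
    then show ?thesis by (rule minimal)
  qed
  have feasmu: "(\<mu>, (- nb) \<cdot>\<^sub>v (minv (T - \<mu> \<cdot>\<^sub>m 1\<^sub>m k) *\<^sub>v e)) \<in> rLGopt_feasible M b0 \<gamma> k"
  proof -
    have nev: "\<forall>i<k. \<mu> \<noteq> \<theta> i" using mu_lt by force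
    define B where "B = minv (T - \<mu> \<cdot>\<^sub>m 1\<^sub>m k)"
    have Bdef: "B = Y * dmat k (\<lambda>i. 1 / (\<theta> i - \<mu>)) * V" and AB: "(T - \<mu> \<cdot>\<^sub>m 1\<^sub>m k) * B = 1\<^sub>m k"
      using inv[OF nev] by (auto simp: B_def)
    have Bc: "B \<in> carrier_mat k k" using Y_carrier by (simp add: Bdef V_def)
    have BT: "transpose_mat B = B" unfolding Bdef V_def by (rule UDU_transpose[OF Y_carrier])
    have ec: "e \<in> carrier_vec k" by (simp add: e_def)
    have Ac: "T - \<mu> \<cdot>\<^sub>m 1\<^sub>m k \<in> carrier_mat k k" unfolding Aeq V_def using Y_carrier by simp
    have xc: "(- nb) \<cdot>\<^sub>v (B *\<^sub>v e) \<in> carrier_vec k" using Bc by (simp add: e_def)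
    have "(T - \<mu> \<cdot>\<^sub>m 1\<^sub>m k) *\<^sub>v ((- nb) \<cdot>\<^sub>v (B *\<^sub>v e)) = (- nb) \<cdot>\<^sub>v ((T - \<mu> \<cdot>\<^sub>m 1\<^sub>m k) *\<^sub>v (B *\<^sub>v e))"
      using Ac Bc ec by (intro mult_mat_vec) auto
    also have "(T - \<mu> \<cdot>\<^sub>m 1\<^sub>m k) *\<^sub>v (B *\<^sub>v e) = ((T - \<mu> \<cdot>\<^sub>m 1\<^sub>m k) * B) *\<^sub>v e"
      using Ac Bc ec by (intro assoc_mult_mat_vec[symmetric, of _ k k _ k]) auto
    also have "\<dots> = e" using AB ec by simp
    finally have eq: "(T - \<mu> \<cdot>\<^sub>m 1\<^sub>m k) *\<^sub>v ((- nb) \<cdot>\<^sub>v (B *\<^sub>v e)) = (- nb) \<cdot>\<^sub>v e" .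
    have "(B *\<^sub>v e) \<bullet> (B *\<^sub>v e) = (transpose_mat B *\<^sub>v e) \<bullet> (B *\<^sub>v e)" using BT by simp
    also have "\<dots> = e \<bullet> (B *\<^sub>v (B *\<^sub>v e))"
      using Bc ec by (intro transpose_vec_mult_scalar[of B k k]) auto
    also have "B *\<^sub>v (B *\<^sub>v e) = (B * B) *\<^sub>v e"
      using Bc ec by (intro assoc_mult_mat_vec[symmetric, of _ k k _ k]) auto
    also have "B * B = B ^\<^sub>m 2" using Bc by (simp add: numeral_2_eq_2)
    finally have "nb^2 * ((B *\<^sub>v e) \<bullet> (B *\<^sub>v e)) = \<phi> \<mu>" using quad[OF nev] by (simp add: B_def)
    then have "((- nb) \<cdot>\<^sub>v (B *\<^sub>v e)) \<bullet> ((- nb) \<cdot>\<^sub>v (B *\<^sub>v e)) = \<gamma>^2"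
      using mu Bc ec by (simp add: power2_eq_square)
    then have "vnorm ((- nb) \<cdot>\<^sub>v (B *\<^sub>v e)) = \<gamma>" using gamma_pos by (simp add: vnorm_def)
    then show ?thesis using eq xc by (simp add: rLGopt_feasible_def T_def[symmetric] nb_def[symmetric] e_def[symmetric] B_def)
  qed
  have P1: "\<forall>lam. (\<forall>i<k. lam \<noteq> \<theta> i) \<longrightarrow>
        vnorm b0 ^ 2 * (unit_vec k 0 \<bullet> ((minv (lanczos_T M b0 k - lam \<cdot>\<^sub>m 1\<^sub>m k) ^\<^sub>m 2)
                                          *\<^sub>v unit_vec k 0)) - \<gamma> ^ 2
        = (\<Sum>i<k. (vnorm b0 * Y $$ (0, i)) ^ 2 / (lam - \<theta> i) ^ 2) - \<gamma> ^ 2"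
    proof (intro allI impI)
    fix lam assume "\<forall>i<k. lam \<noteq> \<theta> i"
    from quad[OF this] show "vnorm b0 ^ 2 * (unit_vec k 0 \<bullet> ((minv (lanczos_T M b0 k - lam \<cdot>\<^sub>m 1\<^sub>m k) ^\<^sub>m 2)
                                          *\<^sub>v unit_vec k 0)) - \<gamma> ^ 2
        = (\<Sum>i<k. (vnorm b0 * Y $$ (0, i)) ^ 2 / (lam - \<theta> i) ^ 2) - \<gamma> ^ 2"
      by (simp add: T_def e_def nb_def \<phi>_def)
    qed
  show ?thesis
  proof (rule conjI[OF P1], rule exI[of _ \<mu>], intro conjI)
    show "\<forall>i<k. \<mu> \<noteq> \<theta> i" using mu_lt by force
  next
    show "(\<Sum>i<k. (vnorm b0 * Y $$ (0, i)) ^ 2 / (\<mu> - \<theta> i) ^ 2) - \<gamma> ^ 2 = 0"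
      using mu by (simp add: \<phi>_def nb_def)
  next
    show "\<forall>r. (\<forall>i<k. r \<noteq> \<theta> i) \<and> (\<Sum>i<k. (vnorm b0 * Y $$ (0, i)) ^ 2 / (r - \<theta> i) ^ 2) - \<gamma> ^ 2 = 0 \<longrightarrow> \<mu> \<le> r"
    proof (intro allI impI)
      fix r assume "(\<forall>i<k. r \<noteq> \<theta> i) \<and> (\<Sum>i<k. (vnorm b0 * Y $$ (0, i)) ^ 2 / (r - \<theta> i) ^ 2) - \<gamma> ^ 2 = 0"
      then show "\<mu> \<le> r" by (intro minimal) (simp add: \<phi>_def nb_def)
    qed
  next
    show "\<forall>(lam, x) \<in> rLGopt_feasible M b0 \<gamma> k. \<mu> \<le> lam" using opt by blast
  next
    show "(\<mu>, (- vnorm b0) \<cdot>\<^sub>v (minv (lanczos_T M b0 k - \<mu> \<cdot>\<^sub>m 1\<^sub>m k) *\<^sub>v unit_vec k 0))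
             \<in> rLGopt_feasible M b0 \<gamma> k"
      using feasmu by (simp add: T_def nb_def e_def)
  qed
qed

end
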